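(* In the execution model described in the context, let $T(t)$ be the time needed for the system to execute a schedule of $t$ iterations. If every node performs a local computation at each iteration with probability $p_{\rm comp}/n$, with $p_{\rm comp}>p^{\max}_{\rm comm}$, or if $\tau>1$, then there exists a constant $C<24$ such that $$\mathbb{P}\Big(\frac{1}{t}T(t)\le \frac{C}{n}\big(p_{\rm comp}+2\tau p^{\max}_{\rm comm}\big)\Big)\to1\quad\text{as }t\to\infty.$$
   Context: Execution model. There are $n$ nodes connected by an undirected communication graph $G$ with edge set $E^{\rm comm}$; $\mathcal{N}(k)$ denotes the neighbors of $k$ in $G$. A schedule is an i.i.d. sequence of updates: at each iteration, either a communication edge $(k,\ell)\in E^{\rm comm}$ is chosen with probability $p_{k\ell}$, or a node performs a local computation update; $p_{\rm comm}=\sum_{(k,\ell)\in E^{\rm comm}}p_{k\ell}$ and $p_{\rm comp}=1-p_{\rm comm}$ is the total probability of a local update. A local update at a node takes time $1$ and involves only that node; a communication update on $(k,\ell)$ takes time $\tau>0$ and involves both $k$ and $\ell$; each node executes its updates in the order of the schedule. Formally, with $T_i(0)=0$: if iteration $t$ is a communication on $(k,\ell)$ then $T_k(t+1)=T_\ell(t+1)=\max(T_k(t),T_\ell(t))+\tau$; if it is a local update at $k$ then $T_k(t+1)=T_k(t)+1$; all other $T_i$ are unchanged. $T(t)=\max_iT_i(t)$. Finally $p^{\max}_{\rm comm}=\frac{n}{2}\max_k\sum_{\ell\in\mathcal{N}(k)}p_{k\ell}$. *)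

theory Defs
  imports "HOL-Probability.Probability"
begin

text \<open>An update of the schedule: a local computation at a node, or a
communication on an (undirected) edge, the edge being encoded as the pair (k,l) with k < l.\<close>
datatype event = Comp nat | Comm nat nat

fun step :: "real \<Rightarrow> event \<Rightarrow> (nat \<Rightarrow> real) \<Rightarrow> (nat \<Rightarrow> real)" where
  "step \<tau> (Comp k) Tv = Tv(k := Tv k + 1)"
| "step \<tau> (Comm k l) Tv =
     (let m = max (Tv k) (Tv l) + \<tau> in Tv(k := m, l := m))"

definition clocks :: "real \<Rightarrow> event stream \<Rightarrow> nat \<Rightarrow> (nat \<Rightarrow> real)" where
  "clocks \<tau> w t = foldl (\<lambda>Tv e. step \<tau> e Tv) (\<lambda>_. 0) (stake t w)"

definition total_time :: "nat \<Rightarrow> real \<Rightarrow> event stream \<Rightarrow> nat \<Rightarrow> real" where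
  "total_time n \<tau> w t = (MAX i\<in>{..<n}. clocks \<tau> w t i)"

definition edge_prob :: "event pmf \<Rightarrow> (nat \<times> nat) set \<Rightarrow> nat \<Rightarrow> nat \<Rightarrow> real" where
  "edge_prob D E k l =
     (if (k, l) \<in> E then pmf D (Comm k l)
      else if (l, k) \<in> E then pmf D (Comm l k) else 0)"

definition p_comm :: "event pmf \<Rightarrow> (nat \<times> nat) set \<Rightarrow> real" where
  "p_comm D E = (\<Sum>e\<in>E. pmf D (Comm (fst e) (snd e)))"

definition p_comp :: "event pmf \<Rightarrow> (nat \<times> nat) set \<Rightarrow> real" where
  "p_comp D E = 1 - p_comm D E"

definition p_comm_max :: "nat \<Rightarrow> event pmf \<Rightarrow> (nat \<times> nat) set \<Rightarrow> real" where
  "p_comm_max n D E = real n / 2 * (MAX k\<in>{..<n}. \<Sum>l<n. edge_prob D E k l)"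

end

theory Submission
  imports Defs
begin


instance event :: countable by countable_datatype

definition cl :: "real \<Rightarrow> (nat \<Rightarrow> real) \<Rightarrow> event list \<Rightarrow> (nat \<Rightarrow> real)" where
  "cl \<tau> Tv xs = foldl (\<lambda>Tv e. step \<tau> e Tv) Tv xs"

definition Phi :: "nat \<Rightarrow> real \<Rightarrow> (nat \<Rightarrow> real) \<Rightarrow> real" where
  "Phi n \<theta> Tv = (\<Sum>i<n. exp (\<theta> * Tv i))"

lemma edge_sum_identity:
  fixes x :: "nat \<Rightarrow> real"
  assumes edges: "E \<subseteq> {(k, l). k < l \<and> l < n}"
  shows "(\<Sum>e\<in>E. pmf D (Comm (fst e) (snd e)) * (x (fst e) + x (snd e)))
       = (\<Sum>i<n. x i * (\<Sum>l<n. edge_prob D E i l))"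
proof -
  have fin: "finite E"
    by (rule finite_subset[OF _ finite_subset[of _ "{..<n} \<times> {..<n}"]]) (use edges in auto)
  have E1: "E \<subseteq> {..<n} \<times> {..<n}" using edges by auto
  have ep: "edge_prob D E i l = (if (i,l) \<in> E then pmf D (Comm i l) else 0)
             + (if (l,i) \<in> E then pmf D (Comm l i) else 0)" for i l
  proof -
    have lt: "(a,b) \<in> E \<Longrightarrow> a < b" for a b using edges by auto
    have "\<not> ((i,l) \<in> E \<and> (l,i) \<in> E)" using lt[of i l] lt[of l i] by auto
    then show ?thesis by (auto simp: edge_prob_def)
  qed
  have "(\<Sum>i<n. x i * (\<Sum>l<n. edge_prob D E i l))
      = (\<Sum>i<n. \<Sum>l<n. (if (i,l) \<in> E then pmf D (Comm i l) * x i else 0))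
      + (\<Sum>i<n. \<Sum>l<n. (if (l,i) \<in> E then pmf D (Comm l i) * x i else 0))"
  proof -
    have "x i * (\<Sum>l<n. edge_prob D E i l) = (\<Sum>l<n. (if (i,l) \<in> E then pmf D (Comm i l) * x i else 0))
       + (\<Sum>l<n. (if (l,i) \<in> E then pmf D (Comm l i) * x i else 0))" for i
      by (simp add: ep sum_distrib_left sum.distrib[symmetric] algebra_simps) (auto intro!: sum.cong)
    then show ?thesis by (simp add: sum.distrib)
  qed
  also have "(\<Sum>i<n. \<Sum>l<n. (if (i,l) \<in> E then pmf D (Comm i l) * x i else 0))
      = (\<Sum>e\<in>{..<n} \<times> {..<n}. (if e \<in> E then pmf D (Comm (fst e) (snd e)) * x (fst e) else 0))"
    by (simp add: sum.cartesian_product case_prod_beta)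
  also have "\<dots> = (\<Sum>e\<in>E. pmf D (Comm (fst e) (snd e)) * x (fst e))"
    using E1 by (simp add: sum.If_cases Int_absorb1)
  also have "(\<Sum>i<n. \<Sum>l<n. (if (l,i) \<in> E then pmf D (Comm l i) * x i else 0))
      = (\<Sum>l<n. \<Sum>i<n. (if (l,i) \<in> E then pmf D (Comm l i) * x i else 0))"
    by (rule sum.swap)
  also have "\<dots> = (\<Sum>e\<in>{..<n} \<times> {..<n}. (if e \<in> E then pmf D (Comm (fst e) (snd e)) * x (snd e) else 0))"
    by (simp add: sum.cartesian_product case_prod_beta)
  also have "\<dots> = (\<Sum>e\<in>E. pmf D (Comm (fst e) (snd e)) * x (snd e))"
    using E1 by (simp add: sum.If_cases Int_absorb1)
  finally show ?thesis by (simp add: distrib_left sum.distrib)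
qed

lemma Phi_upd:
  assumes "k < n"
  shows "Phi n \<theta> (Tv(k := v)) = Phi n \<theta> Tv - exp (\<theta> * Tv k) + exp (\<theta> * v)"
proof -
  have "Phi n \<theta> (Tv(k := v)) = (\<Sum>i<n. exp (\<theta> * Tv i) + (if i = k then exp (\<theta> * v) - exp (\<theta> * Tv k) else 0))"
    unfolding Phi_def by (rule sum.cong) auto
  also have "\<dots> = Phi n \<theta> Tv + (exp (\<theta> * v) - exp (\<theta> * Tv k))"
    using assms by (simp add: sum.distrib Phi_def)
  finally show ?thesis by simp
qed

lemma Phi_comp:
  assumes "k < n"
  shows "Phi n \<theta> (step \<tau> (Comp k) Tv) = Phi n \<theta> Tv + (exp \<theta> - 1) * exp (\<theta> * Tv k)"
  using Phi_upd[OF assms] by (simp add: distrib_left exp_add algebra_simps)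

lemma Phi_comm:
  assumes "k < n" "l < n" "k \<noteq> l" "\<tau> > 0"
  shows "Phi n \<theta> (step \<tau> (Comm k l) Tv) \<le> Phi n \<theta> Tv + (2 * exp (\<theta> * \<tau>) - 1) * (exp (\<theta> * Tv k) + exp (\<theta> * Tv l))"
proof -
  define m where "m = max (Tv k) (Tv l) + \<tau>"
  have "Phi n \<theta> (step \<tau> (Comm k l) Tv) = Phi n \<theta> (Tv(k := m, l := m))"
    by (simp add: m_def Let_def)
  also have "\<dots> = Phi n \<theta> Tv - exp (\<theta> * Tv k) - exp (\<theta> * Tv l) + 2 * exp (\<theta> * m)"
    using Phi_upd[OF assms(2), of \<theta> "Tv(k := m)" m] Phi_upd[OF assms(1), of \<theta> Tv m] assms(3) by simp
  also have "exp (\<theta> * m) \<le> exp (\<theta> * \<tau>) * (exp (\<theta> * Tv k) + exp (\<theta> * Tv l))"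
  proof -
    have "exp (\<theta> * m) = exp (\<theta> * \<tau>) * exp (\<theta> * max (Tv k) (Tv l))"
      by (simp add: m_def distrib_left exp_add)
    moreover have "exp (\<theta> * max (Tv k) (Tv l)) \<le> exp (\<theta> * Tv k) + exp (\<theta> * Tv l)"
      by (cases "Tv k \<le> Tv l") (auto simp: max_def add_nonneg_nonneg)
    ultimately show ?thesis by (simp add: mult_left_mono)
  qed
  finally show ?thesis by (simp add: algebra_simps)
qed

lemma one_step:
  assumes n_pos: "n > 0"
    and edges: "E \<subseteq> {(k, l). k < l \<and> l < n}"
    and support: "set_pmf D \<subseteq> {Comp k | k. k < n} \<union> {Comm k l | k l. (k, l) \<in> E}"
    and tau_pos: "\<tau> > 0"
    and uniform_comp: "\<forall>k<n. pmf D (Comp k) = p_comp D E / real n"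
    and theta: "\<theta> \<ge> 0"
  shows "(\<Sum>x\<in>set_pmf D. pmf D x * Phi n \<theta> (step \<tau> x Tv))
    \<le> (1 + p_comp D E / real n * (exp \<theta> - 1)
         + (2 * exp (\<theta> * \<tau>) - 1) * (MAX k\<in>{..<n}. \<Sum>l<n. edge_prob D E k l)) * Phi n \<theta> Tv"
proof -
  define Mx where "Mx = (MAX k\<in>{..<n}. \<Sum>l<n. edge_prob D E k l)"
  define c where "c = 2 * exp (\<theta> * \<tau>) - 1"
  define P where "P = Phi n \<theta> Tv"
  define xx where "xx = (\<lambda>i. exp (\<theta> * Tv i))"
  define g where "g = (\<lambda>x. pmf D x * Phi n \<theta> (step \<tau> x Tv))"
  have c_nn: "c \<ge> 0" proof -
    have "1 \<le> exp (\<theta> * \<tau>)" using theta tau_pos by (simp add: zero_le_mult_iff)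
    then show ?thesis unfolding c_def by linarith
  qed
  have finE: "finite E"
    by (rule finite_subset[of _ "{..<n} \<times> {..<n}"]) (use edges in auto)
  define S1 where "S1 = Comp ` {..<n}"
  define S2 where "S2 = (\<lambda>e. Comm (fst e) (snd e)) ` E"
  have supp: "set_pmf D \<subseteq> S1 \<union> S2"
  proof
    fix x assume "x \<in> set_pmf D"
    then have "x \<in> {Comp k | k. k < n} \<union> {Comm k l | k l. (k, l) \<in> E}" using support by blast
    then show "x \<in> S1 \<union> S2"
    proof
      assume "x \<in> {Comp k | k. k < n}" then show ?thesis by (auto simp: S1_def)
    next
      assume "x \<in> {Comm k l | k l. (k, l) \<in> E}"
      then obtain k l where "x = Comm k l" "(k,l) \<in> E" by blast
      then have "x = (\<lambda>e. Comm (fst e) (snd e)) (k,l)" by simp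
      then show ?thesis using \<open>(k,l) \<in> E\<close> unfolding S2_def by blast
    qed
  qed
  have fin: "finite (S1 \<union> S2)" using finE by (simp add: S1_def S2_def)
  have "(\<Sum>x\<in>set_pmf D. g x) = (\<Sum>x\<in>S1 \<union> S2. g x)"
    by (rule sum.mono_neutral_left[OF fin supp]) (auto simp: g_def set_pmf_iff)
  also have "\<dots> = (\<Sum>x\<in>S1. g x) + (\<Sum>x\<in>S2. g x)"
    by (rule sum.union_disjoint) (use finE in \<open>auto simp: S1_def S2_def\<close>)
  also have "(\<Sum>x\<in>S1. g x) = (\<Sum>k<n. g (Comp k))"
    unfolding S1_def by (subst sum.reindex) (auto simp: inj_on_def)
  also have "\<dots> = (\<Sum>k<n. p_comp D E / real n * (P + (exp \<theta> - 1) * xx k))"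
    by (rule sum.cong) (auto simp: g_def uniform_comp Phi_comp P_def xx_def simp del: step.simps)
  also have "\<dots> = p_comp D E * P + p_comp D E / real n * (exp \<theta> - 1) * (\<Sum>k<n. xx k)"
    proof -
    have "(\<Sum>k<n. p_comp D E / real n * (P + (exp \<theta> - 1) * xx k))
        = (\<Sum>k<n. p_comp D E / real n * P) + p_comp D E / real n * (exp \<theta> - 1) * (\<Sum>k<n. xx k)"
      by (simp add: distrib_left sum.distrib sum_distrib_left mult.assoc)
    also have "(\<Sum>k<n. p_comp D E / real n * P) = p_comp D E * P" using n_pos by simp
    finally show ?thesis .
  qed
  also have "(\<Sum>k<n. xx k) = P" by (simp add: P_def Phi_def xx_def)
  also have "(\<Sum>x\<in>S2. g x) = (\<Sum>e\<in>E. g (Comm (fst e) (snd e)))"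
    unfolding S2_def by (subst sum.reindex) (auto simp: inj_on_def prod_eq_iff)
  also have "\<dots> \<le> (\<Sum>e\<in>E. pmf D (Comm (fst e) (snd e)) * P + c * (pmf D (Comm (fst e) (snd e)) * (xx (fst e) + xx (snd e))))"
  proof (rule sum_mono)
    fix e assume "e \<in> E"
    then have "fst e < n" "snd e < n" "fst e \<noteq> snd e" using edges by auto
    from Phi_comm[OF this tau_pos, of \<theta> Tv]
    have hPhi: "Phi n \<theta> (step \<tau> (Comm (fst e) (snd e)) Tv) \<le> P + c * (xx (fst e) + xx (snd e))"
      by (simp add: P_def c_def xx_def)
    then show "g (Comm (fst e) (snd e)) \<le> pmf D (Comm (fst e) (snd e)) * P + c * (pmf D (Comm (fst e) (snd e)) * (xx (fst e) + xx (snd e)))"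
      proof -
      have "pmf D (Comm (fst e) (snd e)) * Phi n \<theta> (step \<tau> (Comm (fst e) (snd e)) Tv)
          \<le> pmf D (Comm (fst e) (snd e)) * (P + c * (xx (fst e) + xx (snd e)))"
        by (rule mult_left_mono[OF hPhi pmf_nonneg])
      then show ?thesis by (simp add: g_def algebra_simps)
    qed
  qed
  also have "\<dots> = p_comm D E * P + c * (\<Sum>i<n. xx i * (\<Sum>l<n. edge_prob D E i l))"
    proof -
    have "(\<Sum>e\<in>E. pmf D (Comm (fst e) (snd e)) * P + c * (pmf D (Comm (fst e) (snd e)) * (xx (fst e) + xx (snd e))))
       = (\<Sum>e\<in>E. pmf D (Comm (fst e) (snd e))) * P + c * (\<Sum>e\<in>E. pmf D (Comm (fst e) (snd e)) * (xx (fst e) + xx (snd e)))"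
      by (simp add: sum.distrib sum_distrib_left sum_distrib_right)
    then show ?thesis by (simp add: p_comm_def edge_sum_identity[OF edges])
  qed
  also have "(\<Sum>i<n. xx i * (\<Sum>l<n. edge_prob D E i l)) \<le> (\<Sum>i<n. xx i * Mx)"
  proof (rule sum_mono)
    fix i assume "i \<in> {..<n}"
    then have "(\<Sum>l<n. edge_prob D E i l) \<le> Mx" unfolding Mx_def by (intro Max_ge) auto
    then show "xx i * (\<Sum>l<n. edge_prob D E i l) \<le> xx i * Mx" by (simp add: xx_def)
  qed
  also have "(\<Sum>i<n. xx i * Mx) = Mx * P" by (simp add: P_def Phi_def xx_def sum_distrib_left mult.commute)
  finally have "(\<Sum>x\<in>set_pmf D. g x) \<le> p_comp D E * P + p_comp D E / real n * (exp \<theta> - 1) * P + (p_comm D E * P + c * (Mx * P))"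
    using c_nn by (simp add: mult_left_mono)
  also have "\<dots> = (1 + p_comp D E / real n * (exp \<theta> - 1) + c * Mx) * P"
    by (simp add: p_comp_def algebra_simps)
  finally show ?thesis by (simp add: g_def c_def Mx_def P_def)
qed

lemma meas_stake: "stake t \<in> measurable (stream_space (measure_pmf D)) (count_space (UNIV :: event list set))"
  by (subst measurable_cong_sets[OF sets_stream_space_cong[OF sets_measure_pmf_count_space] refl])
     (rule measurable_stake)

lemma meas_fun_stake: "(\<lambda>w. (f :: _ \<Rightarrow> ennreal) (stake t w)) \<in> borel_measurable (stream_space (measure_pmf (D :: event pmf)))"
  by (rule measurable_compose[OF meas_stake]) simp

lemma Phi_nonneg: "Phi n \<theta> Tv \<ge> 0"
  unfolding Phi_def by (simp add: sum_nonneg)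

lemma cl_Cons: "cl \<tau> Tv (x # xs) = cl \<tau> (step \<tau> x Tv) xs"
  by (simp add: cl_def)

lemma iter_bound:
  assumes os: "\<And>Tv. (\<Sum>x\<in>set_pmf D. pmf D x * Phi n \<theta> (step \<tau> x Tv)) \<le> \<rho> * Phi n \<theta> Tv"
    and fin: "finite (set_pmf D)" and rho: "\<rho> \<ge> 0"
  shows "(\<integral>\<^sup>+w. ennreal (Phi n \<theta> (cl \<tau> Tv (stake t w))) \<partial>stream_space (measure_pmf D))
           \<le> ennreal (\<rho> ^ t * Phi n \<theta> Tv)"
proof (induction t arbitrary: Tv)
  case 0
  interpret S: prob_space "stream_space (measure_pmf D)" by (rule prob_space.prob_space_stream_space[OF prob_space_measure_pmf])
  show ?case by (simp add: cl_def S.emeasure_space_1)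
next
  case (Suc t)
  have "(\<integral>\<^sup>+w. ennreal (Phi n \<theta> (cl \<tau> Tv (stake (Suc t) w))) \<partial>stream_space (measure_pmf D))
      = (\<integral>\<^sup>+x. (\<integral>\<^sup>+X. ennreal (Phi n \<theta> (cl \<tau> Tv (stake (Suc t) (x ## X)))) \<partial>stream_space (measure_pmf D)) \<partial>measure_pmf D)"
    by (rule prob_space.nn_integral_stream_space[OF prob_space_measure_pmf]) (rule meas_fun_stake)
  also have "\<dots> = (\<integral>\<^sup>+x. (\<integral>\<^sup>+X. ennreal (Phi n \<theta> (cl \<tau> (step \<tau> x Tv) (stake t X))) \<partial>stream_space (measure_pmf D)) \<partial>measure_pmf D)"
    by (simp add: cl_Cons)
  also have "\<dots> \<le> (\<integral>\<^sup>+x. ennreal (\<rho> ^ t * Phi n \<theta> (step \<tau> x Tv)) \<partial>measure_pmf D)"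
    by (rule nn_integral_mono) (rule Suc.IH)
  also have "\<dots> = (\<Sum>x\<in>set_pmf D. ennreal (\<rho> ^ t * Phi n \<theta> (step \<tau> x Tv)) * ennreal (pmf D x))"
    by (rule nn_integral_measure_pmf_finite[OF fin]) simp
  also have "\<dots> = ennreal (\<Sum>x\<in>set_pmf D. \<rho> ^ t * Phi n \<theta> (step \<tau> x Tv) * pmf D x)"
    by (subst sum_ennreal[symmetric]) (auto simp: ennreal_mult'' rho Phi_nonneg intro!: sum.cong mult_nonneg_nonneg)
  also have "\<dots> \<le> ennreal (\<rho> ^ Suc t * Phi n \<theta> Tv)"
  proof (rule ennreal_leI)
    have "(\<Sum>x\<in>set_pmf D. \<rho> ^ t * Phi n \<theta> (step \<tau> x Tv) * pmf D x)
        = \<rho> ^ t * (\<Sum>x\<in>set_pmf D. pmf D x * Phi n \<theta> (step \<tau> x Tv))"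
      by (simp add: sum_distrib_left mult.commute mult.left_commute)
    also have "\<dots> \<le> \<rho> ^ t * (\<rho> * Phi n \<theta> Tv)"
      by (rule mult_left_mono[OF os]) (simp add: rho)
    finally show "(\<Sum>x\<in>set_pmf D. \<rho> ^ t * Phi n \<theta> (step \<tau> x Tv) * pmf D x) \<le> \<rho> ^ Suc t * Phi n \<theta> Tv"
      by (simp add: mult.left_commute)
  qed
  finally show ?case .
qed



lemma exp_le3: fixes y :: real assumes "y \<le> 1" shows "exp y \<le> (3::real)"
proof -
  have "exp y \<le> exp 1" using assms by simp
  then show ?thesis using exp_le by linarith
qed

lemma exp_sub_one_le: fixes y :: real assumes "0 \<le> y" "y \<le> 1" shows "exp y - 1 \<le> 3 * y"
proof -
  have "1 - y \<le> exp (- y)" using exp_ge_add_one_self[of "-y"] by simp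
  then have "(1 - y) * exp y \<le> exp (-y) * exp y" by (simp add: mult_right_mono)
  also have "exp (-y) * exp y = 1" by (simp add: exp_minus)
  finally have "exp y - 1 \<le> y * exp y" by (simp add: algebra_simps)
  also have "\<dots> \<le> y * 3"
    using assms exp_le3[OF assms(2)] by (simp add: mult_left_mono)
  finally show ?thesis by simp
qed

lemma key_ineq:
  fixes q Mx \<tau> \<theta> :: real
  assumes q: "q \<ge> 0" and Mx: "Mx \<ge> 0" and tau: "\<tau> > 0" and pos: "q > 0 \<or> Mx > 0"
    and cs: "(\<tau> > 1 \<and> \<theta> = 1 / \<tau>) \<or> (\<tau> \<le> 1 \<and> \<theta> = 1 \<and> Mx < 2 * q)"
  shows "q * (exp \<theta> - 1) + (2 * exp (\<theta> * \<tau>) - 1) * Mx < \<theta> * (23 * q + 23 * \<tau> * Mx)"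
  using cs
proof
  assume a: "\<tau> > 1 \<and> \<theta> = 1 / \<tau>"
  then have th: "0 < \<theta>" "\<theta> \<le> 1" "\<theta> * \<tau> = 1" by auto
  have e1: "exp \<theta> - 1 \<le> 3 * \<theta>" using exp_sub_one_le[of \<theta>] th by linarith
  have h1: "q * (exp \<theta> - 1) \<le> q * (3 * \<theta>)" using e1 q by (rule mult_left_mono)
  have "2 * exp (\<theta> * \<tau>) - 1 \<le> 5" using th(3) exp_le by simp
  then have h2: "(2 * exp (\<theta> * \<tau>) - 1) * Mx \<le> 5 * Mx" using Mx by (rule mult_right_mono)
  have y: "q * \<theta> \<ge> 0" using q th by simp
  have "q > 0 \<Longrightarrow> q * \<theta> > 0" using th by simp
  then have "q * \<theta> > 0 \<or> Mx > 0" using pos by blast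
  then have h3: "3 * (q * \<theta>) + 5 * Mx < 23 * (q * \<theta>) + 23 * Mx" using y Mx by linarith
  have "\<theta> * (23 * q + 23 * \<tau> * Mx) = 23 * (q * \<theta>) + 23 * Mx"
    using th(3) by (simp add: algebra_simps)
  then show ?thesis using h1 h2 h3 by (simp add: mult.commute mult.left_commute)
next
  assume a: "\<tau> \<le> 1 \<and> \<theta> = 1 \<and> Mx < 2 * q"
  then have qp: "q > 0" using Mx by linarith
  have "exp \<tau> \<le> 3" using a exp_le3 by blast
  then have "2 * exp (\<theta> * \<tau>) - 1 \<le> 5" using a by simp
  then have h1: "(2 * exp (\<theta> * \<tau>) - 1) * Mx \<le> 5 * Mx" using Mx by (rule mult_right_mono)
  have "exp \<theta> - 1 \<le> 2" using a exp_le by simp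
  then have h2: "q * (exp \<theta> - 1) \<le> q * 2" using q by (rule mult_left_mono)
  have h3: "q * 2 + 5 * Mx < 23 * q" using a qp by linarith
  have h4: "23 * q \<le> 23 * q + 23 * \<tau> * Mx" using tau Mx by simp
  have "\<theta> = 1" using a by simp
  then show ?thesis using h1 h2 h3 h4 by (simp add: mult.commute)
qed


theorem theorem2:
  fixes n :: nat and E :: "(nat \<times> nat) set" and D :: "event pmf" and \<tau> :: real
  assumes n_pos: "n > 0"
    and edges: "E \<subseteq> {(k, l). k < l \<and> l < n}"
    and support: "set_pmf D \<subseteq> {Comp k | k. k < n} \<union> {Comm k l | k l. (k, l) \<in> E}"
    and tau_pos: "\<tau> > 0"
    and uniform_comp: "\<forall>k<n. pmf D (Comp k) = p_comp D E / real n"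
    and cond: "p_comp D E > p_comm_max n D E \<or> \<tau> > 1"
  shows "\<exists>C < 24.
     (\<lambda>t. measure (stream_space (measure_pmf D))
            {w \<in> space (stream_space (measure_pmf D)).
               total_time n \<tau> w t / real t
                 \<le> C / real n * (p_comp D E + 2 * \<tau> * p_comm_max n D E)})
     \<longlonglongrightarrow> 1"
proof -
  let ?M = "stream_space (measure_pmf D)"
  interpret S: prob_space ?M by (rule prob_space.prob_space_stream_space[OF prob_space_measure_pmf])
  define p where "p = p_comp D E"
  define Mx where "Mx = (MAX k\<in>{..<n}. \<Sum>l<n. edge_prob D E k l)"
  define \<theta> where "\<theta> = (if \<tau> > 1 then 1 / \<tau> else 1)"
  define x where "x = 23 / real n * (p_comp D E + 2 * \<tau> * p_comm_max n D E)"
  define \<rho> where "\<rho> = 1 + p_comp D E / real n * (exp \<theta> - 1) + (2 * exp (\<theta> * \<tau>) - 1) * Mx"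
  have pm: "p_comm_max n D E = real n / 2 * Mx" by (simp add: p_comm_max_def Mx_def)
  have p_nn: "p \<ge> 0"
  proof -
    have "pmf D (Comp 0) = p / real n" using uniform_comp n_pos by (simp add: p_def)
    then have "p = real n * pmf D (Comp 0)" using n_pos by simp
    then show ?thesis by simp
  qed
  have Mx_ge: "(\<Sum>l<n. edge_prob D E i l) \<le> Mx" if "i < n" for i
    unfolding Mx_def using that by (intro Max_ge) auto
  have Mx_nn: "Mx \<ge> 0"
  proof -
    have "0 \<le> (\<Sum>l<n. edge_prob D E 0 l)" by (rule sum_nonneg) (simp add: edge_prob_def)
    then show ?thesis using Mx_ge[OF n_pos] by linarith
  qed
  have pcomm: "2 * p_comm D E \<le> real n * Mx"
  proof -
    have "(\<Sum>e\<in>E. pmf D (Comm (fst e) (snd e)) * (1 + 1)) = (\<Sum>i<n. 1 * (\<Sum>l<n. edge_prob D E i l))"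
      using edge_sum_identity[OF edges, of D "\<lambda>_. 1"] by simp
    also have "\<dots> \<le> (\<Sum>i<n. Mx)" by (rule sum_mono) (use Mx_ge in simp)
    finally show ?thesis by (simp add: p_comm_def sum_distrib_left mult.commute)
  qed
  have pos: "p / real n > 0 \<or> Mx > 0"
  proof (cases "p > 0")
    case True then show ?thesis using n_pos by simp
  next
    case False
    then have "p = 0" using p_nn by simp
    then have "p_comm D E = 1" by (simp add: p_def p_comp_def)
    then have "real n * Mx \<ge> 2" using pcomm by simp
    then show ?thesis using Mx_nn by (cases "Mx = 0") auto
  qed
  have cs: "(\<tau> > 1 \<and> \<theta> = 1 / \<tau>) \<or> (\<tau> \<le> 1 \<and> \<theta> = 1 \<and> Mx < 2 * (p / real n))"
  proof (cases "\<tau> > 1")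
    case True then show ?thesis by (simp add: \<theta>_def)
  next
    case False
    then have "p > real n / 2 * Mx" using cond pm by (simp add: p_def)
    then have "Mx < 2 * (p / real n)" using n_pos by (simp add: field_simps)
    then show ?thesis using False by (simp add: \<theta>_def)
  qed
  have th_pos: "\<theta> > 0" using tau_pos by (simp add: \<theta>_def)
  have key: "p / real n * (exp \<theta> - 1) + (2 * exp (\<theta> * \<tau>) - 1) * Mx
      < \<theta> * (23 * (p / real n) + 23 * \<tau> * Mx)"
    by (rule key_ineq[OF _ Mx_nn tau_pos pos cs]) (use p_nn in simp)
  have thx: "\<theta> * x = \<theta> * (23 * (p / real n) + 23 * \<tau> * Mx)"
    using n_pos by (simp add: x_def pm p_def field_simps)
  have rho_lt: "\<rho> < exp (\<theta> * x)"
  proof -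
    have "\<rho> < 1 + \<theta> * (23 * (p / real n) + 23 * \<tau> * Mx)" using key by (simp add: \<rho>_def p_def)
    also have "\<dots> = 1 + \<theta> * x" by (simp only: thx)
    also have "\<dots> \<le> exp (\<theta> * x)" by (rule exp_ge_add_one_self)
    finally show ?thesis .
  qed
  have rho_ge: "\<rho> \<ge> 1"
  proof -
    have e1: "exp \<theta> - 1 \<ge> 0" using th_pos by simp
    have "1 \<le> exp (\<theta> * \<tau>)" using th_pos tau_pos by (simp add: zero_le_mult_iff)
    then have e2: "2 * exp (\<theta> * \<tau>) - 1 \<ge> 0" by linarith
    have "p_comp D E / real n * (exp \<theta> - 1) \<ge> 0"
      using p_nn e1 by (simp add: p_def)
    moreover have "(2 * exp (\<theta> * \<tau>) - 1) * Mx \<ge> 0"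
      using e2 Mx_nn by (rule mult_nonneg_nonneg)
    ultimately show ?thesis by (simp add: \<rho>_def)
  qed
  define r where "r = \<rho> / exp (\<theta> * x)"
  have r_nn: "r \<ge> 0" and r_lt: "r < 1" using rho_lt rho_ge by (auto simp: r_def)
  have os: "\<And>Tv. (\<Sum>y\<in>set_pmf D. pmf D y * Phi n \<theta> (step \<tau> y Tv)) \<le> \<rho> * Phi n \<theta> Tv"
    unfolding \<rho>_def Mx_def
    by (rule one_step[OF n_pos edges support tau_pos uniform_comp]) (use th_pos in simp)
  have fin: "finite (set_pmf D)"
  proof (rule finite_subset[OF support])
    have finE: "finite E"
      by (rule finite_subset[of _ "{..<n} \<times> {..<n}"]) (use edges in auto)
    have "{Comm k l | k l. (k, l) \<in> E} = (\<lambda>e. Comm (fst e) (snd e)) ` E" by force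
    moreover have "{Comp k | k. k < n} = Comp ` {..<n}" by auto
    ultimately show "finite ({Comp k | k. k < n} \<union> {Comm k l | k l. (k, l) \<in> E})"
      using finE by simp
  qed
  have Phi0: "Phi n \<theta> (\<lambda>_. 0) = real n" by (simp add: Phi_def)
  define A where "A = (\<lambda>t. {w \<in> space ?M. total_time n \<tau> w t / real t \<le> x})"
  have tt: "total_time n \<tau> w t = (MAX i\<in>{..<n}. cl \<tau> (\<lambda>_. 0) (stake t w) i)" for w t
    by (simp add: total_time_def clocks_def cl_def)
  have bound: "measure ?M (A t) \<ge> 1 - real n * r ^ t" if t: "t > 0" for t
  proof -
    define B where "B = space ?M - A t"
    have B_eq: "B = stake t -` {xs. \<not> ((MAX i\<in>{..<n}. cl \<tau> (\<lambda>_. 0) xs i) / real t \<le> x)} \<inter> space ?M"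
      by (auto simp: B_def A_def tt)
    have B_sets: "B \<in> sets ?M" unfolding B_eq by (rule measurable_sets[OF meas_stake]) simp
    have ptw: "ennreal (exp (\<theta> * x * real t)) * indicator B w \<le> ennreal (Phi n \<theta> (cl \<tau> (\<lambda>_. 0) (stake t w)))" for w
    proof (cases "w \<in> B")
      case False then show ?thesis by simp
    next
      case True
      define c where "c = cl \<tau> (\<lambda>_. 0) (stake t w)"
      have "\<not> ((MAX i\<in>{..<n}. c i) / real t \<le> x)" using True B_eq c_def by auto
      then have lt: "x * real t < (MAX i\<in>{..<n}. c i)" using t by (simp add: pos_divide_le_eq)
      have "(MAX i\<in>{..<n}. c i) \<in> c ` {..<n}" by (rule Max_in) (use n_pos in auto)
      then obtain i where i: "i < n" "(MAX i\<in>{..<n}. c i) = c i" by auto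
      have "exp (\<theta> * x * real t) \<le> exp (\<theta> * c i)"
        using lt i th_pos by (simp add: mult.assoc)
      also have "\<dots> \<le> Phi n \<theta> c" unfolding Phi_def
        by (rule member_le_sum) (use i in auto)
      finally show ?thesis using True c_def by (simp add: ennreal_leI)
    qed
    have "ennreal (exp (\<theta> * x * real t)) * emeasure ?M B
        = (\<integral>\<^sup>+w. ennreal (exp (\<theta> * x * real t)) * indicator B w \<partial>?M)"
      by (rule nn_integral_cmult_indicator[symmetric, OF B_sets])
    also have "\<dots> \<le> (\<integral>\<^sup>+w. ennreal (Phi n \<theta> (cl \<tau> (\<lambda>_. 0) (stake t w))) \<partial>?M)"
      by (rule nn_integral_mono) (rule ptw)
    also have "\<dots> \<le> ennreal (\<rho> ^ t * Phi n \<theta> (\<lambda>_. 0))"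
      by (rule iter_bound[OF os fin]) (use rho_ge in simp)
    finally have "ennreal (exp (\<theta> * x * real t) * measure ?M B) \<le> ennreal (\<rho> ^ t * real n)"
      by (simp add: S.emeasure_eq_measure ennreal_mult'' Phi0)
    then have le: "exp (\<theta> * x * real t) * measure ?M B \<le> \<rho> ^ t * real n"
      using rho_ge by (subst (asm) ennreal_le_iff) auto
    have ex: "exp (\<theta> * x * real t) = exp (\<theta> * x) ^ t"
      using exp_of_nat_mult[of t "\<theta> * x"] by (simp add: mult.commute)
    have "measure ?M B \<le> \<rho> ^ t * real n / exp (\<theta> * x) ^ t"
      using le ex by (simp add: field_simps)
    also have "\<dots> = real n * r ^ t" by (simp add: r_def power_divide)
    finally have mB: "measure ?M B \<le> real n * r ^ t" .
    have "A t = space ?M - B" by (auto simp: B_def A_def)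
    then have "measure ?M (A t) = 1 - measure ?M B" using S.prob_compl[OF B_sets] by simp
    then show ?thesis using mB by simp
  qed
  have lim: "(\<lambda>t. 1 - real n * r ^ t) \<longlonglongrightarrow> 1"
  proof -
    have "(\<lambda>t. 1 - real n * r ^ t) \<longlonglongrightarrow> 1 - real n * 0"
      using r_nn r_lt by (intro tendsto_intros) auto
    then show ?thesis by simp
  qed
  have "(\<lambda>t. measure ?M (A t)) \<longlonglongrightarrow> 1"
  proof (rule tendsto_sandwich[OF _ _ lim tendsto_const])
    show "\<forall>\<^sub>F t in sequentially. 1 - real n * r ^ t \<le> measure ?M (A t)"
      using eventually_gt_at_top[of 0] by eventually_elim (rule bound)
    show "\<forall>\<^sub>F t in sequentially. measure ?M (A t) \<le> 1" by (simp add: S.prob_le_1)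
  qed
  then show ?thesis unfolding A_def x_def by (intro exI[of _ 23]) simp
qed

end
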